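(* For every positive integer $\ell$, there exist integers $p_1,\dots,p_\ell$ with $j\le p_j\le j(j+1)$ for all $1\le j\le\ell$ such that the $\ell\times\ell$ matrix $A(\{p_j\}_{j=1}^\ell)$ with entries $A_{ij}=C_{p_j}(i)$, $i,j\in[\ell]$, is invertible.
   Context: For a positive integer $p$ and $y\ge0$, $C_p(y)=p\,(1-(1-1/p)^y)$. *)

theory Defs
  imports Complex_Main "Jordan_Normal_Form.Matrix"
begin

definition C :: "nat \<Rightarrow> real \<Rightarrow> real" where
  "C p y = real p * (1 - (1 - 1 / real p) powr y)"

definition Amat :: "nat \<Rightarrow> (nat \<Rightarrow> nat) \<Rightarrow> real mat" where
  "Amat l p = mat l l (\<lambda>(i, j). C (p (j + 1)) (real (i + 1)))"

end

theory Submission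
  imports Defs "Jordan_Normal_Form.Determinant" "HOL-Computational_Algebra.Polynomial"
begin

lemma vander:
  fixes q v :: "nat \<Rightarrow> real"
  assumes inj: "inj_on q {..<l}" and z: "\<forall>k<l. (\<Sum>j<l. v j * q j ^ k) = 0" and j0: "j0 < l"
  shows "v j0 = 0"
proof -
  define P where "P = (\<Prod>j\<in>{..<l}-{j0}. [:- q j, 1:])"
  have degP: "degree P = l - 1"
    unfolding P_def using j0 by (subst degree_prod_eq_sum_degree) auto
  have polyP: "poly P x = (\<Sum>k<l. coeff P k * x ^ k)" for x
  proof -
    have "poly P x = (\<Sum>k\<le>degree P. coeff P k * x ^ k)" by (simp add: poly_altdef)
    also have "{..degree P} = {..<l}" using degP j0 by auto
    finally show ?thesis .
  qed
  have "(\<Sum>j<l. v j * poly P (q j)) = (\<Sum>k<l. coeff P k * (\<Sum>j<l. v j * q j ^ k))"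
    unfolding polyP sum_distrib_left sum_distrib_right
    by (subst sum.swap) (auto intro!: sum.cong)
  also have "\<dots> = 0" using z by simp
  finally have s: "(\<Sum>j<l. v j * poly P (q j)) = 0" .
  have other: "poly P (q j) = 0" if "j < l" "j \<noteq> j0" for j
    unfolding P_def poly_prod using that
    by (intro prod_zero bexI[of _ j]) auto
  have "(\<Sum>j<l. v j * poly P (q j)) = v j0 * poly P (q j0)"
    using j0 other by (subst sum.remove[of _ j0]) (auto intro!: sum.neutral)
  moreover have "poly P (q j0) \<noteq> 0"
    unfolding P_def poly_prod using inj j0 by (auto simp: inj_on_def)
  ultimately show ?thesis using s by simp
qed

lemma Cval: "C (j+1) (real (i+1)) = real (j+1) * (1 - (real j / real (j+1)) ^ (i+1))"
proof -
  have q: "1 - 1 / real (j+1) = real j / real (j+1)" by (simp add: field_simps)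
  show ?thesis
  proof (cases "j = 0")
    case True thus ?thesis by (simp add: C_def)
  next
    case False
    hence "(real j / real (j+1)) powr real (i+1) = (real j / real (j+1)) ^ (i+1)"
      by (subst powr_realpow) auto
    thus ?thesis unfolding C_def q by simp
  qed
qed

theorem lemma8:
  fixes l :: nat
  assumes "l \<ge> 1"
  shows "\<exists>p :: nat \<Rightarrow> nat. (\<forall>j \<in> {1..l}. j \<le> p j \<and> p j \<le> j * (j + 1))
           \<and> invertible_mat (Amat l p)"
proof (intro exI conjI)
  show "\<forall>j \<in> {1..l}. j \<le> id j \<and> id j \<le> j * (j + 1)" by auto
  define A where "A = Amat l id"
  have A: "A \<in> carrier_mat l l" unfolding A_def Amat_def by auto
  define q where "q j = real j / real (j+1)" for j
  have qinj: "inj_on q {..<l}"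
  proof (rule inj_onI)
    fix a b assume "q a = q b"
    hence "real a * real (b+1) = real b * real (a+1)" unfolding q_def
      by (simp add: field_simps)
    thus "a = b" by (simp add: algebra_simps)
  qed
  have Aent: "A $$ (i,j) = real (j+1) * (1 - q j ^ (i+1))" if "i < l" "j < l" for i j
    using that Cval[of j i] unfolding A_def Amat_def q_def by (simp del: of_nat_Suc)
  have "det A \<noteq> 0"
  proof
    assume "det A = 0"
    then obtain v where v: "v \<in> carrier_vec l" "v \<noteq> 0\<^sub>v l" "A *\<^sub>v v = 0\<^sub>v l"
      using det_0_iff_vec_prod_zero_field[OF A] by blast
    define S where "S i = (\<Sum>j<l. real (j+1) * (1 - q j ^ i) * v $ j)" for i
    have S0: "S 0 = 0" unfolding S_def by simp
    have Ssuc: "S (i+1) = 0" if "i < l" for i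
    proof -
      have "(A *\<^sub>v v) $ i = 0" using v(3) that by simp
      moreover have "(A *\<^sub>v v) $ i = (\<Sum>j<l. A $$ (i,j) * v $ j)"
        using A v(1) that by (simp add: mult_mat_vec_def scalar_prod_def lessThan_atLeast0)
      ultimately show ?thesis unfolding S_def using that by (simp add: Aent)
    qed
    have Sd: "S (k+1) - S k = (\<Sum>j<l. v $ j * q j ^ k)" for k
    proof -
      have "S (k+1) - S k = (\<Sum>j<l. real (j+1) * (1 - q j ^ (k+1)) * v $ j - real (j+1) * (1 - q j ^ k) * v $ j)"
        unfolding S_def by (simp add: sum_subtractf)
      also have "\<dots> = (\<Sum>j<l. v $ j * q j ^ k)"
      proof (rule sum.cong)
        fix j
        have "real (j+1) * (1 - q j) = 1" unfolding q_def by (simp add: field_simps)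
        hence "real (j+1) * (1 - q j ^ (k+1)) * v $ j - real (j+1) * (1 - q j ^ k) * v $ j
              = (real (j+1) * (1 - q j)) * v $ j * q j ^ k"
        proof -
          have "(1 - q j ^ (k+1)) - (1 - q j ^ k) = (1 - q j) * q j ^ k" by (simp add: algebra_simps)
          hence "real (j+1) * (1 - q j ^ (k+1)) * v $ j - real (j+1) * (1 - q j ^ k) * v $ j
             = real (j+1) * ((1 - q j ^ (k+1)) - (1 - q j ^ k)) * v $ j" by (simp add: algebra_simps)
          also have "\<dots> = (real (j+1) * (1 - q j)) * v $ j * q j ^ k"
            using \<open>(1 - q j ^ (k+1)) - (1 - q j ^ k) = (1 - q j) * q j ^ k\<close> by (simp only: mult_ac)
          finally show ?thesis .
        qed
        also have "\<dots> = v $ j * q j ^ k" using \<open>real (j+1) * (1 - q j) = 1\<close> by simp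
        finally show "real (j+1) * (1 - q j ^ (k+1)) * v $ j - real (j+1) * (1 - q j ^ k) * v $ j = v $ j * q j ^ k" .
      qed simp
      finally show ?thesis .
    qed
    have z: "\<forall>k<l. (\<Sum>j<l. v $ j * q j ^ k) = 0"
    proof (intro allI impI)
      fix k assume "k < l"
      have "S k = 0" using S0 Ssuc[of "k-1"] \<open>k<l\<close> by (cases k) auto
      thus "(\<Sum>j<l. v $ j * q j ^ k) = 0" using Ssuc[OF \<open>k<l\<close>] Sd[of k] by simp
    qed
    have "v = 0\<^sub>v l"
    proof (rule eq_vecI)
      fix j assume "j < dim_vec (0\<^sub>v l)"
      hence "j < l" by simp
      thus "v $ j = 0\<^sub>v l $ j" using vander[OF qinj _ \<open>j<l\<close>, of "\<lambda>j. v $ j"] z by simp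
    qed (use v(1) in simp)
    with v(2) show False by simp
  qed
  then have "A \<in> Units (ring_mat TYPE(real) l ())"
    by (rule det_non_zero_imp_unit[OF A])
  then obtain B where B: "B \<in> carrier_mat l l" "B * A = 1\<^sub>m l" "A * B = 1\<^sub>m l"
    unfolding Units_def ring_mat_def by auto
  show "invertible_mat (Amat l id)"
    unfolding A_def[symmetric] invertible_mat_def inverts_mat_def square_mat.simps
    using A B by auto
qed

end
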